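(* Let $q=2^m$. Then the setwise stabilizer $\mathrm{Stab}_{U_{q+1}}$ of $U_{q+1}$ consists exactly of the following linear fractional transformations: (I) $u\mapsto u_0u$ with $u_0\in U_{q+1}$; (II) $u\mapsto u_0u^{-1}$ with $u_0\in U_{q+1}$; (III) $u\mapsto \frac{u+c^qu_0}{cu+u_0}$ with $u_0\in U_{q+1}$ and $c\in\mathrm{GF}(q^2)^*\setminus U_{q+1}$.
   Context: $U_{q+1}$ is the set of $(q+1)$-th roots of unity in $\mathrm{GF}(q^2)$, viewed as a subset of $\mathrm{PG}(1,q^2)=\mathrm{GF}(q^2)\cup\{\infty\}$. $\mathrm{Stab}_{U_{q+1}}$ is the setwise stabilizer of $U_{q+1}$ under the action of $\mathrm{PGL}_2(\mathrm{GF}(q^2))$ on $\mathrm{PG}(1,q^2)$ by linear fractional transformations $x\mapsto\frac{ax+b}{cx+d}$. *)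

theory Defs
  imports Main
begin

text \<open>The projective line PG(1,F) over a field F is modelled as \<open>'a option\<close>:
  \<open>Some x\<close> is the affine point x and \<open>None\<close> is the point at infinity.\<close>

definition lft :: "'a::field \<Rightarrow> 'a \<Rightarrow> 'a \<Rightarrow> 'a \<Rightarrow> 'a option \<Rightarrow> 'a option" where
  "lft a b c d p = (case p of
      None \<Rightarrow> (if c = 0 then None else Some (a / c))
    | Some x \<Rightarrow> (if c * x + d = 0 then None else Some ((a * x + b) / (c * x + d))))"

text \<open>PGL_2(F), identified with the set of permutations of PG(1,F) it induces
  (the action is faithful).\<close>
definition PGL2 :: "('a::field option \<Rightarrow> 'a option) set" where
  "PGL2 = {f. \<exists>a b c d. a * d - b * c \<noteq> 0 \<and> f = lft a b c d}"

definition roots_of_unity :: "nat \<Rightarrow> 'a::field set" where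
  "roots_of_unity n = {x. x ^ n = 1}"

definition Stab :: "'a::field set \<Rightarrow> ('a option \<Rightarrow> 'a option) set" where
  "Stab S = {f \<in> PGL2. f ` (Some ` S) = Some ` S}"

end

theory Submission
  imports Defs "HOL-Computational_Algebra.Polynomial"
begin

lemma fermat:
  fixes x :: "'a::{field,finite}"
  assumes "x \<noteq> 0"
  shows "x ^ (card (UNIV::'a set) - 1) = 1"
proof -
  let ?S = "UNIV - {0::'a}"
  have bij: "bij_betw (\<lambda>y. x*y) ?S ?S"
    unfolding bij_betw_def
  proof
    show "inj_on (\<lambda>y. x*y) ?S" using assms by (auto simp: inj_on_def)
    show "(\<lambda>y. x*y) ` ?S = ?S"
    proof
      show "(\<lambda>y. x*y) ` ?S \<subseteq> ?S" using assms by auto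
      show "?S \<subseteq> (\<lambda>y. x*y) ` ?S"
      proof
        fix z assume z: "z \<in> ?S"
        hence "z = x * (z/x)" "z/x \<in> ?S" using assms by auto
        thus "z \<in> (\<lambda>y. x*y) ` ?S" by blast
      qed
    qed
  qed
  have "prod (\<lambda>y. x*y) ?S = prod id ?S"
    using prod.reindex_bij_betw[OF bij, of id] by simp
  moreover have "prod (\<lambda>y. x*y) ?S = x ^ card ?S * prod id ?S"
    by (simp add: prod.distrib)
  moreover have "prod id ?S \<noteq> 0" by (simp add: prod_zero_iff)
  ultimately have "x ^ card ?S = 1" by simp
  moreover have "card ?S = card (UNIV::'a set) - 1" by (simp add: card_Diff_singleton)
  ultimately show ?thesis by simp
qed

lemma frob2:
  fixes x y :: "'a::field"
  assumes "(1::'a) + 1 = 0"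
  shows "(x + y) ^ (2 ^ k) = x ^ (2 ^ k) + y ^ (2 ^ k)"
proof (induction k)
  case 0 then show ?case by simp
next
  case (Suc k)
  have sq: "(a + b)^2 = a^2 + b^2" for a b :: 'a
  proof -
    have "(a+b)^2 = a^2 + b^2 + (1+1)*a*b" by (simp add: power2_eq_square algebra_simps)
    thus ?thesis using assms by simp
  qed
  have "(x+y)^(2^Suc k) = ((x+y)^(2^k))^2" by (simp add: power_mult[symmetric] mult.commute)
  also have "\<dots> = (x^(2^k))^2 + (y^(2^k))^2" using Suc sq by simp
  also have "\<dots> = x^(2^Suc k) + y^(2^Suc k)" by (simp add: power_mult[symmetric] mult.commute)
  finally show ?case .
qed

lemma quad0:
  fixes A B C :: "'a::field"
  assumes "u1 \<noteq> u2" "u1 \<noteq> u3" "u2 \<noteq> u3"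
    and "A + B*u1 + C*u1^2 = 0" "A + B*u2 + C*u2^2 = 0" "A + B*u3 + C*u3^2 = 0"
  shows "A = 0 \<and> B = 0 \<and> C = 0"
proof -
  have "(u1-u2)*(B + C*(u1+u2)) = (A + B*u1 + C*u1^2) - (A + B*u2 + C*u2^2)"
    by (simp add: power2_eq_square algebra_simps)
  hence e1: "B + C*(u1+u2) = 0" using assms by simp
  have "(u1-u3)*(B + C*(u1+u3)) = (A + B*u1 + C*u1^2) - (A + B*u3 + C*u3^2)"
    by (simp add: power2_eq_square algebra_simps)
  hence e2: "B + C*(u1+u3) = 0" using assms by simp
  have "C*(u2-u3) = (B + C*(u1+u2)) - (B + C*(u1+u3))" by (simp add: algebra_simps)
  hence C: "C = 0" using e1 e2 assms by simp
  hence "B = 0" using e1 by simp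
  thus ?thesis using C assms(4) by simp
qed

lemma lft_inj:
  fixes a b c d u v :: "'a::field"
  assumes "a*d - b*c \<noteq> 0" "c*u+d \<noteq> 0" "c*v+d \<noteq> 0"
    "(a*u+b)/(c*u+d) = (a*v+b)/(c*v+d)"
  shows "u = v"
proof -
  have "(a*u+b)*(c*v+d) = (a*v+b)*(c*u+d)" using assms(2-4) by (simp add: frac_eq_eq)
  moreover have "(a*d-b*c)*(u-v) = (a*u+b)*(c*v+d) - (a*v+b)*(c*u+d)" by (simp add: algebra_simps)
  ultimately have "(a*d-b*c)*(u-v) = 0" by simp
  thus ?thesis using assms(1) by simp
qed

lemma lft_scale:
  fixes k a b c d :: "'a::field"
  assumes "k \<noteq> 0"
  shows "lft (k*a) (k*b) (k*c) (k*d) = lft a b c d"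
proof
  fix p show "lft (k*a) (k*b) (k*c) (k*d) p = lft a b c d p"
  proof (cases p)
    case None then show ?thesis using assms by (simp add: lft_def)
  next
    case (Some x)
    have e1: "k*c*x + k*d = k*(c*x+d)" "k*a*x + k*b = k*(a*x+b)" by (simp_all add: algebra_simps)
    show ?thesis using assms Some by (simp add: lft_def e1)
  qed
qed

lemma stab_intro:
  fixes U :: "'a::{field,finite} set"
  assumes "a*d - b*c \<noteq> 0" "\<And>u. u \<in> U \<Longrightarrow> c*u+d \<noteq> 0 \<and> (a*u+b)/(c*u+d) \<in> U"
  shows "lft a b c d \<in> Stab U"
proof -
  have img: "lft a b c d ` (Some ` U) \<subseteq> Some ` U" using assms(2) by (auto simp: lft_def)
  have inj: "inj_on (lft a b c d) (Some ` U)"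
  proof (rule inj_onI)
    fix x y assume "x \<in> Some ` U" "y \<in> Some ` U" "lft a b c d x = lft a b c d y"
    then obtain u v where "x = Some u" "y = Some v" "u \<in> U" "v \<in> U"
      "lft a b c d (Some u) = lft a b c d (Some v)" by auto
    moreover have "u = v"
      using lft_inj[OF assms(1)] assms(2) calculation by (auto simp: lft_def)
    ultimately show "x = y" by simp
  qed
  have "lft a b c d ` (Some ` U) = Some ` U"
    by (rule endo_inj_surj[OF _ img inj]) simp
  thus ?thesis using assms(1) by (auto simp: Stab_def PGL2_def)
qed

lemma alg_key:
  fixes p u a b c d a' b' c' d' :: "'a::field"
  assumes "p*u = 1" "(a'*p + b')*(a*u+b) = (c'*p+d')*(c*u+d)"
  shows "(a'*b - c'*d) + (a'*a + b'*b - c'*c - d'*d)*u + (b'*a - d'*c)*u^2 = 0"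
proof -
  have u0: "u \<noteq> 0" using assms(1) by auto
  have u: "u \<noteq> 0" "p = 1/u" using assms(1) u0 by (simp_all add: eq_divide_eq)
  have h1: "u*((a'*p + b')*(a*u+b)) = (a'*(p*u) + b'*u)*(a*u+b)" by (simp add: algebra_simps)
  have h2: "u*((c'*p + d')*(c*u+d)) = (c'*(p*u) + d'*u)*(c*u+d)" by (simp add: algebra_simps)
  have "(a' + b'*u)*(a*u+b) = (c' + d'*u)*(c*u+d)" using h1 h2 assms by simp
  hence "(a' + b'*u)*(a*u+b) - (c' + d'*u)*(c*u+d) = 0" by simp
  moreover have "(a' + b'*u)*(a*u+b) - (c' + d'*u)*(c*u+d) = (a'*b - c'*d) + (a'*a + b'*b - c'*c - d'*d)*u + (b'*a - d'*c)*u^2"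
    by (simp add: algebra_simps power2_eq_square)
  ultimately show ?thesis by simp
qed

lemma alg3:
  fixes p r u v c s :: "'a::field"
  assumes "p*u = 1" "r*v = 1"
  shows "(p + c*r)*(u + s*v) = (s*p + r)*(c*u + v)"
proof -
  have u0: "u \<noteq> 0" "v \<noteq> 0" using assms by auto
  have u: "u \<noteq> 0" "p = 1/u" "v \<noteq> 0" "r = 1/v" using assms u0 by (simp_all add: eq_divide_eq)
  show ?thesis using u by (simp add: field_simps)
qed

theorem proposition5:
  fixes m :: nat and q :: nat
  assumes "q = 2 ^ m"
    and "card (UNIV :: 'a::{field,finite} set) = q ^ 2"
  shows "Stab (roots_of_unity (q + 1) :: 'a set) =
      {lft u0 0 0 1 | u0. u0 \<in> roots_of_unity (q + 1)}
    \<union> {lft 0 u0 1 0 | u0. u0 \<in> roots_of_unity (q + 1)}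
    \<union> {lft 1 (c ^ q * u0) c u0 | u0 c.
          u0 \<in> roots_of_unity (q + 1) \<and> c \<noteq> 0 \<and> c \<notin> roots_of_unity (q + 1)}"
proof -
  let ?U = "roots_of_unity (q + 1) :: 'a set"
  let ?n = "card (UNIV :: 'a set)"
  have n2: "?n \<ge> 2"
  proof -
    have "card {0::'a, 1} \<le> ?n" by (rule card_mono) auto
    thus ?thesis by simp
  qed
  have m1: "m \<ge> 1"
  proof (rule ccontr)
    assume "\<not> m \<ge> 1" hence "m = 0" by simp
    thus False using n2 assms by simp
  qed
  have q2: "q \<ge> 2"
  proof -
    have "(2::nat)^1 \<le> 2^m" using m1 by (rule power_increasing) simp
    thus ?thesis using assms(1) by simp
  qed
  have char: "(1::'a) + 1 = 0"
  proof -
    have e: "(-1::'a)^(?n - 1) = 1" by (rule fermat) simp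
    have "even ?n" using assms q2 m1 by simp
    hence "odd (?n - 1)" using n2 by simp
    hence "(-1::'a)^(?n - 1) = -1" by simp
    hence "(-1::'a) = 1" using e by simp
    thus ?thesis by (metis add.right_inverse)
  qed
  have xx: "x + x = 0" for x :: 'a
  proof -
    have "x + x = x * (1 + 1)" by (simp add: algebra_simps)
    thus "x + x = 0" using char by simp
  qed
  have neg: "- x = x" for x :: 'a
    using xx[of x] by (simp add: add_eq_0_iff2)
  have frob: "(x + y)^q = x^q + y^q" for x y :: 'a
    using frob2[OF char] assms(1) by simp
  have fq: "(x^q)^q = x" for x :: 'a
  proof (cases "x = 0")
    case True thus ?thesis using q2 by simp
  next
    case False
    have "(x^q)^q = x^?n" using assms(2) by (simp add: power_mult[symmetric] power2_eq_square)
    also have "\<dots> = x * x^(?n - 1)"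
    proof -
      have "?n = Suc (?n - 1)" using n2 by simp
      thus ?thesis by (metis power_Suc)
    qed
    also have "\<dots> = x" using fermat[OF False] by simp
    finally show ?thesis .
  qed
  have q0: "(0::'a)^q = 0" using q2 by simp
  have Uiff: "x \<in> ?U \<longleftrightarrow> x^q * x = 1" for x :: 'a
    by (simp add: roots_of_unity_def mult.commute)
  have Unz: "x \<in> ?U \<Longrightarrow> x \<noteq> 0" for x using Uiff q0 by auto
  \<comment> \<open>three distinct elements of U\<close>
  obtain x :: 'a where x: "x^q \<noteq> x"
  proof (rule ccontr)
    assume "\<not> thesis"
    hence all: "\<forall>x::'a. x^q = x" using that by blast
    define P :: "'a poly" where "P = monom 1 q + [:0,1:]"
    have dP: "degree P = q" unfolding P_def using q2
      by (subst degree_add_eq_left) (auto simp: degree_monom_eq)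
    hence P0: "P \<noteq> 0" using q2 by auto
    have "poly P x = 0" for x
      using all xx[of x] by (simp add: P_def poly_monom)
    hence "{x. poly P x = 0} = UNIV" by auto
    hence "?n \<le> q" using card_poly_roots_bound[OF P0] dP by simp
    thus False using assms q2 by (simp add: power2_eq_square)
  qed
  have x0: "x \<noteq> 0" using x q0 by auto
  define v where "v = x^q / x"
  have vU: "v \<in> ?U"
    proof -
    have xq: "x^q \<noteq> 0" using x0 by simp
    have "(x^q/x)^q * (x^q/x) = ((x^q)^q/x^q) * (x^q/x)" by (simp only: power_divide)
    also have "\<dots> = (x/x^q)*(x^q/x)" by (simp only: fq)
    also have "\<dots> = 1" using x0 xq by simp
    finally show ?thesis unfolding Uiff v_def .
  qed
  have v1: "v \<noteq> 1" using x x0 unfolding v_def by simp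
  have v0: "v \<noteq> 0" using vU Unz by blast
  have viU: "1/v \<in> ?U" using vU unfolding Uiff by (simp add: power_divide)
  have oneU: "1 \<in> ?U" unfolding Uiff by simp
  have vv: "v \<noteq> 1/v"
  proof
    assume "v = 1/v"
    hence "v*v = 1" using v0 by (simp add: field_simps)
    moreover have "(v+1)*(v+1) = v*v + 1 + (v + v)" by (simp add: algebra_simps)
    ultimately have "(v+1)*(v+1) = 0" using char xx[of v] by simp
    hence "v = -1" by (simp add: eq_neg_iff_add_eq_0)
    thus False using v1 neg by simp
  qed
  have v1': "1 \<noteq> 1/v" using v1 v0 by (simp add: eq_divide_eq)
  show ?thesis
  proof (intro equalityI subsetI)
    fix f assume "f \<in> Stab ?U"
    then obtain a b c d where det: "a*d - b*c \<noteq> 0" and f: "f = lft a b c d"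
      and img: "f ` (Some ` ?U) = Some ` ?U" by (auto simp: Stab_def PGL2_def)
    have cond: "c*u+d \<noteq> 0 \<and> (a*u+b)/(c*u+d) \<in> ?U" if u: "u \<in> ?U" for u
    proof -
      have "f (Some u) \<in> Some ` ?U" using img u by blast
      thus ?thesis unfolding f lft_def by (auto split: if_splits)
    qed
    define A where "A = a^q*b - c^q*d"
    define B where "B = a^q*a + b^q*b - c^q*c - d^q*d"
    define C where "C = b^q*a - d^q*c"
    have key: "A + B*u + C*u^2 = 0" if u: "u \<in> ?U" for u
    proof -
      have cu: "c*u+d \<noteq> 0" and w: "(a*u+b)/(c*u+d) \<in> ?U" using cond[OF u] by auto
      have "((a*u+b)^q * (a*u+b)) / ((c*u+d)^q * (c*u+d)) = 1"
        using w unfolding Uiff by (simp add: power_divide)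
      hence "(a*u+b)^q * (a*u+b) = (c*u+d)^q * (c*u+d)" using cu by (simp add: divide_eq_eq)
      hence "(a^q*u^q + b^q) * (a*u+b) = (c^q*u^q + d^q) * (c*u+d)"
        by (simp add: frob power_mult_distrib)
      thus ?thesis unfolding A_def B_def C_def
        by (intro alg_key[where p="u^q"]) (use u Uiff in \<open>simp_all add: mult.commute\<close>)
    qed
    have ABC: "A = 0 \<and> B = 0 \<and> C = 0"
      by (rule quad0[OF v1[symmetric] v1' vv key[OF oneU] key[OF vU] key[OF viU]])
    show "f \<in> {lft u0 0 0 1 | u0. u0 \<in> ?U} \<union> {lft 0 u0 1 0 | u0. u0 \<in> ?U}
      \<union> {lft 1 (c ^ q * u0) c u0 | u0 c. u0 \<in> ?U \<and> c \<noteq> 0 \<and> c \<notin> ?U}"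
    proof (cases "c = 0")
      case True
      hence a0: "a \<noteq> 0" and d0: "d \<noteq> 0" using det by auto
      have "a^q*b = 0" using ABC True q0 unfolding A_def by simp
      hence b0: "b = 0" using a0 by simp
      have "a^q*a = d^q*d" using ABC True q0 b0 unfolding B_def by simp
      hence inU: "a/d \<in> ?U" unfolding Uiff using d0 by (simp add: power_divide)
      have "f = lft (d*(a/d)) (d*0) (d*0) (d*1)" using f True b0 d0 by simp
      also have "\<dots> = lft (a/d) 0 0 1" by (rule lft_scale[OF d0])
      finally show ?thesis using inU by blast
    next
      case c0: False
      show ?thesis
      proof (cases "a = 0")
        case True
        hence b0: "b \<noteq> 0" using det by auto
        have "c^q*d = 0" using ABC True q0 unfolding A_def by simp
        hence d0: "d = 0" using c0 by simp
        have "b^q*b = c^q*c" using ABC True q0 d0 unfolding B_def by simp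
        hence inU: "b/c \<in> ?U" unfolding Uiff using c0 by (simp add: power_divide)
        have "f = lft (c*0) (c*(b/c)) (c*1) (c*0)" using f True d0 c0 by simp
        also have "\<dots> = lft 0 (b/c) 1 0" by (rule lft_scale[OF c0])
        finally show ?thesis using inU by blast
      next
        case a0: False
        define b' where "b' = b/a"
        define c' where "c' = c/a"
        define d' where "d' = d/a"
        have aq: "a^q \<noteq> 0" using a0 by simp
        have hA: "a^q*b = c^q*d" using ABC unfolding A_def by simp
        have hb: "b' = c'^q * d'" unfolding b'_def c'_def d'_def using hA a0 aq
          by (simp add: power_divide field_simps)
        have hB: "a^q*a + b^q*b = c^q*c + d^q*d" using ABC unfolding B_def by (simp add: algebra_simps)
        have hB': "1 + b'^q*b' = c'^q*c' + d'^q*d'"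
          unfolding b'_def c'_def d'_def using hB a0 aq by (simp add: power_divide field_simps)
        define X where "X = c'^q*c'"
        define Y where "Y = d'^q*d'"
        have "b'^q*b' = X*Y" unfolding hb X_def Y_def by (simp add: power_mult_distrib fq algebra_simps)
        hence e: "1 + X*Y = X + Y" using hB' X_def Y_def by simp
        have "(1+X)*(1+Y) = (1 + X*Y) + (X + Y)" by (simp add: algebra_simps)
        also have "\<dots> = (X+Y) * (1+1)" using e by (simp add: algebra_simps)
        finally have prod0: "(1+X)*(1+Y) = 0" using char by simp
        have "a*d - b*c = a*a*(d' - b'*c')" unfolding b'_def c'_def d'_def using a0 by (simp add: field_simps)
        also have "\<dots> = a*a*(d'*(1 - X))" unfolding hb X_def by (simp add: algebra_simps)
        finally have "1 - X \<noteq> 0" using det by auto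
        hence X1: "1 + X \<noteq> 0" using neg by (metis diff_conv_add_uminus)
        hence "1 + Y = 0" using prod0 by simp
        hence Y1: "Y = 1" using neg by (metis add.commute add_eq_0_iff)
        have "X \<noteq> 1" using X1 char by auto
        hence cU: "c' \<notin> ?U" unfolding Uiff X_def by simp
        have dU: "d' \<in> ?U" unfolding Uiff using Y1 Y_def by simp
        have c'0: "c' \<noteq> 0" using c0 a0 c'_def by simp
        have "f = lft (a*1) (a*b') (a*c') (a*d')" unfolding f b'_def c'_def d'_def using a0 by simp
        also have "\<dots> = lft 1 b' c' d'" by (rule lft_scale[OF a0])
        finally have "f = lft 1 (c'^q * d') c' d'" using hb by simp
        thus ?thesis using cU dU c'0 by blast
      qed
    qed
  next
    fix f assume "f \<in> {lft u0 0 0 1 | u0. u0 \<in> ?U} \<union> {lft 0 u0 1 0 | u0. u0 \<in> ?U}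
      \<union> {lft 1 (c ^ q * u0) c u0 | u0 c. u0 \<in> ?U \<and> c \<noteq> 0 \<and> c \<notin> ?U}"
    then consider (I) u0 where "u0 \<in> ?U" "f = lft u0 0 0 1"
      | (II) u0 where "u0 \<in> ?U" "f = lft 0 u0 1 0"
      | (III) u0 c where "u0 \<in> ?U" "c \<noteq> 0" "c \<notin> ?U" "f = lft 1 (c ^ q * u0) c u0"
      by blast
    then show "f \<in> Stab ?U"
    proof cases
      case I
      show ?thesis unfolding I(2)
      proof (rule stab_intro)
        show "u0 * 1 - 0 * 0 \<noteq> 0" using Unz[OF I(1)] by simp
        fix u assume u: "u \<in> ?U"
        have "(u0*u)^q*(u0*u) = (u0^q*u0)*(u^q*u)" by (simp add: power_mult_distrib ac_simps)
        also have "\<dots> = 1" using u I(1) Uiff by (simp only: mult_1_left)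
        finally show "0 * u + 1 \<noteq> 0 \<and> (u0 * u + 0) / (0 * u + 1) \<in> ?U"
          unfolding Uiff by simp
      qed
    next
      case II
      show ?thesis unfolding II(2)
      proof (rule stab_intro)
        show "0 * 0 - u0 * 1 \<noteq> 0" using Unz[OF II(1)] by simp
        fix u assume u: "u \<in> ?U"
        thus "1 * u + 0 \<noteq> 0 \<and> (0 * u + u0) / (1 * u + 0) \<in> ?U"
          using II(1) Unz[OF u] unfolding Uiff by (simp add: power_divide)
      qed
    next
      case III
      have u00: "u0 \<noteq> 0" using Unz[OF III(1)] by simp
      have Nc: "c^q*c \<noteq> 1" using III(3) Uiff by simp
      show ?thesis unfolding III(4)
      proof (rule stab_intro)
        have "1 * u0 - c ^ q * u0 * c = u0 * (1 - c^q*c)" by (simp add: algebra_simps)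
        thus "1 * u0 - c ^ q * u0 * c \<noteq> 0" using u00 Nc by simp
        fix u assume u: "u \<in> ?U"
        have u0': "u \<noteq> 0" using Unz[OF u] .
        have den: "c*u + u0 \<noteq> 0"
        proof
          assume "c*u + u0 = 0"
          hence "c*u = - u0" by (simp add: eq_neg_iff_add_eq_0)
          hence "c = u0/u" using neg u0' by (simp add: eq_divide_eq)
          hence "c^q*c = (u0^q*u0)/(u^q*u)" by (simp add: power_divide)
          also have "\<dots> = 1" using u III(1) Uiff by (simp only: div_by_1)
          finally show False using Nc by simp
        qed
        have pu: "u^q*u = 1" and pu0: "u0^q*u0 = 1" using u III(1) Uiff by auto
        have "(1*u + c^q*u0)^q * (1*u + c^q*u0) = (u^q + c*u0^q) * (u + c^q*u0)"
          by (simp add: frob power_mult_distrib fq)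
        also have "\<dots> = (c^q*u^q + u0^q) * (c*u + u0)" by (rule alg3[OF pu pu0])
        also have "\<dots> = (c*u+u0)^q * (c*u+u0)" by (simp add: frob power_mult_distrib)
        finally have E: "(1*u + c^q*u0)^q * (1*u + c^q*u0) = (c*u+u0)^q * (c*u+u0)" .
        have "((1*u + c^q*u0)/(c*u+u0))^q * ((1*u + c^q*u0)/(c*u+u0)) = 1"
          using E den by (simp add: power_divide)
        thus "c * u + u0 \<noteq> 0 \<and> (1 * u + c ^ q * u0) / (c * u + u0) \<in> ?U"
          using den unfolding Uiff by simp
      qed
    qed
  qed
qed

end
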